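(* For $n\ge2$, the matrix ordered dual $NC(n)^d$ is completely order isomorphic to the operator subsystem $\mathcal W=\Big\{\bigoplus_{k=1}^n\begin{pmatrix}a^k_{11}&a^k_{12}\\ a^k_{21}&a^k_{22}\end{pmatrix}: a^k_{ii}=a^l_{jj}\ (i,j=1,2,\ k,l=1,\dots,n),\ a^k_{12}=a^k_{21}\ (k=1,\dots,n)\Big\}$ of $\bigoplus_{k=1}^n M_2$.
   Context: $NC(n)=\mathrm{span}\{1,h_1,\dots,h_n\}$ inside the universal unital C$^*$-algebra generated by selfadjoint contractions $h_1,\dots,h_n$. For a finite-dimensional operator system $\mathcal S$, the matrix ordered dual $\mathcal S^d$ is the dual space with $M_n(\mathcal S^d)$ identified with linear maps $\mathcal S\to M_n$ and positive cone the completely positive maps (an operator system with a faithful state as unit). *)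

theory Defs
  imports Complex_Main "HOL-Library.Complex_Order"
begin

definition psd_on :: "'i set \<Rightarrow> ('i \<Rightarrow> 'i \<Rightarrow> complex) \<Rightarrow> bool" where
  "psd_on I M \<longleftrightarrow> (\<forall>v. 0 \<le> (\<Sum>a\<in>I. \<Sum>b\<in>I. cnj (v a) * M a b * v b))"

definition selfadj_contraction :: "nat \<Rightarrow> (nat \<Rightarrow> nat \<Rightarrow> complex) \<Rightarrow> bool" where
  "selfadj_contraction m T \<longleftrightarrow>
     (\<forall>a<m. \<forall>b<m. T b a = cnj (T a b)) \<and>
     psd_on {..<m} (\<lambda>a b. (if a = b then 1 else 0) - (\<Sum>c<m. cnj (T c a) * T c b))"

text \<open>An element of M_p(NC(n)) is written
  A 0 (x) 1 + sum_{i=1..n} A i (x) h_i with p x p matrices A i (entries A i r s).\<close>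
definition nc_pos :: "nat \<Rightarrow> nat \<Rightarrow> (nat \<Rightarrow> nat \<Rightarrow> nat \<Rightarrow> complex) \<Rightarrow> bool" where
  "nc_pos n p A \<longleftrightarrow>
     (\<forall>m T. (\<forall>i\<in>{1..n}. selfadj_contraction m (T i)) \<longrightarrow>
        psd_on ({..<p} \<times> {..<m})
          (\<lambda>(r, a) (s, b). A 0 r s * (if a = b then 1 else 0) + (\<Sum>i\<in>{1..n}. A i r s * T i a b)))"

text \<open>Matrix order of the dual NC(n)^d. An element of M_p(NC(n)^d) is a linear map
  phi : NC(n) -> M_p, encoded by B i = phi(h_i) (with h_0 = 1). It is positive iff phi is
  completely positive.\<close>
definition dual_pos :: "nat \<Rightarrow> nat \<Rightarrow> (nat \<Rightarrow> nat \<Rightarrow> nat \<Rightarrow> complex) \<Rightarrow> bool" where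
  "dual_pos n p B \<longleftrightarrow>
     (\<forall>q A. nc_pos n q A \<longrightarrow>
        psd_on ({..<q} \<times> {..<p}) (\<lambda>(r, a) (s, b). \<Sum>i\<le>n. A i r s * B i a b))"

text \<open>An element Y of
  M_p(M_2 + ... + M_2) has entries Y k r s i j (summand k, outer entry (r,s), inner (i,j));
  it is positive iff for each k the corresponding matrix in M_p(M_2) = M_2p is positive.\<close>
definition dsum_pos :: "nat \<Rightarrow> nat \<Rightarrow> (nat \<Rightarrow> nat \<Rightarrow> nat \<Rightarrow> nat \<Rightarrow> nat \<Rightarrow> complex) \<Rightarrow> bool" where
  "dsum_pos n p Y \<longleftrightarrow>
     (\<forall>k\<in>{1..n}. psd_on ({..<p} \<times> {..<2}) (\<lambda>(r, i) (s, j). Y k r s i j))"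

definition in_W :: "nat \<Rightarrow> (nat \<Rightarrow> nat \<Rightarrow> nat \<Rightarrow> complex) \<Rightarrow> bool" where
  "in_W n w \<longleftrightarrow>
     (\<forall>k\<in>{1..n}. \<forall>l\<in>{1..n}. \<forall>i<2. \<forall>j<2. w k i i = w l j j) \<and>
     (\<forall>k\<in>{1..n}. w k 0 1 = w k 1 0)"

text \<open>The linear map NC(n)^d -> M_2 + ... + M_2 determined by the images c l of the
  basis functionals dual to 1, h_1, ..., h_n.\<close>
definition lin_map :: "nat \<Rightarrow> (nat \<Rightarrow> nat \<Rightarrow> nat \<Rightarrow> nat \<Rightarrow> complex) \<Rightarrow> (nat \<Rightarrow> complex)
    \<Rightarrow> nat \<Rightarrow> nat \<Rightarrow> nat \<Rightarrow> complex" where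
  "lin_map n c f = (\<lambda>k i j. \<Sum>l\<le>n. f l * c l k i j)"

definition lin_map_ampl :: "nat \<Rightarrow> (nat \<Rightarrow> nat \<Rightarrow> nat \<Rightarrow> nat \<Rightarrow> complex)
    \<Rightarrow> (nat \<Rightarrow> nat \<Rightarrow> nat \<Rightarrow> complex) \<Rightarrow> nat \<Rightarrow> nat \<Rightarrow> nat \<Rightarrow> nat \<Rightarrow> nat \<Rightarrow> complex" where
  "lin_map_ampl n c B = (\<lambda>k r s. lin_map n c (\<lambda>l. B l r s) k)"

definition compl_order_iso_dual_W :: "nat \<Rightarrow> (nat \<Rightarrow> nat \<Rightarrow> nat \<Rightarrow> nat \<Rightarrow> complex) \<Rightarrow> bool" where
  "compl_order_iso_dual_W n c \<longleftrightarrow>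
     (\<forall>f. in_W n (lin_map n c f)) \<and>
     (\<forall>w. in_W n w \<longrightarrow> (\<exists>f. \<forall>k\<in>{1..n}. \<forall>i<2. \<forall>j<2. lin_map n c f k i j = w k i j)) \<and>
     (\<forall>f. (\<forall>k\<in>{1..n}. \<forall>i<2. \<forall>j<2. lin_map n c f k i j = 0) \<longrightarrow> (\<forall>l\<le>n. f l = 0)) \<and>
     (\<forall>p B. dual_pos n p B \<longleftrightarrow> dsum_pos n p (lin_map_ampl n c B))"

end

theory Submission
  imports Defs
begin


definition bil :: "nat \<Rightarrow> (nat\<Rightarrow>nat\<Rightarrow>complex) \<Rightarrow> (nat\<Rightarrow>complex) \<Rightarrow> (nat\<Rightarrow>complex) \<Rightarrow> complex" where
  "bil p M x y = (\<Sum>a<p. \<Sum>b<p. cnj (x a) * M a b * y b)"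

definition herm :: "nat \<Rightarrow> (nat\<Rightarrow>nat\<Rightarrow>complex) \<Rightarrow> bool" where
  "herm p M = (\<forall>a<p. \<forall>b<p. M b a = cnj (M a b))"

definition idm :: "nat \<Rightarrow> nat \<Rightarrow> complex" where
  "idm a b = (if a = b then 1 else 0)"

lemma idm_sum: "a < p \<Longrightarrow> (\<Sum>e<p. idm a e * f e) = f a"
proof -
  assume "a < p"
  have "\<And>e. idm a e * f e = (if a = e then f e else 0)" by (simp add: idm_def)
  then show ?thesis using \<open>a < p\<close> by (simp add: sum.delta)
qed

lemma idm_sum': "a < p \<Longrightarrow> (\<Sum>e<p. f e * idm e a) = f a"
proof -
  assume "a < p"
  have "\<And>e. f e * idm e a = (if a = e then f e else 0)" by (simp add: idm_def)
  then show ?thesis using \<open>a < p\<close> by (simp add: sum.delta)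
qed

lemma hermD: "herm p M \<Longrightarrow> a < p \<Longrightarrow> b < p \<Longrightarrow> M b a = cnj (M a b)"
  unfolding herm_def by blast

lemma bil_Suc:
  "bil (Suc p) M x y = bil p M x y + cnj (x p) * (\<Sum>b<p. M p b * y b)
     + (\<Sum>a<p. cnj (x a) * M a p) * y p + cnj (x p) * M p p * y p"
  unfolding bil_def
  by (simp add: sum.distrib sum_distrib_left sum_distrib_right algebra_simps)

lemma schur_form:
  fixes M :: "nat\<Rightarrow>nat\<Rightarrow>complex" and dr :: real and x :: "nat \<Rightarrow> complex"
  assumes h: "herm (Suc p) M" and d: "M p p = of_real dr" and dr: "dr > 0"
  defines "t \<equiv> - (\<Sum>b<p. M p b * x b) / M p p"
  shows "bil (Suc p) M (x(p := t)) (x(p := t)) = bil p (\<lambda>a b. M a b - M a p * M p b / M p p) x x"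
proof -
  define u where "u = (\<Sum>b<p. M p b * x b)"
  have cu: "(\<Sum>a<p. cnj (x a) * M a p) = cnj u"
  proof -
    have "\<And>a. a < p \<Longrightarrow> cnj (x a) * M a p = cnj (M p a * x a)"
      proof -
      fix a assume "a < p"
      then have "M a p = cnj (M p a)" using hermD[OF h, of p a] by simp
      then show "cnj (x a) * M a p = cnj (M p a * x a)" by (simp add: mult.commute)
    qed
    then show ?thesis unfolding u_def by (simp only: cnj_sum) (rule sum.cong, auto)
  qed
  have e1: "bil p M (x(p := t)) (x(p := t)) = bil p M x x"
    unfolding bil_def by (intro sum.cong) auto
  have e2: "(\<Sum>b<p. M p b * (x(p := t)) b) = u" unfolding u_def by (intro sum.cong) auto
  have e3: "(\<Sum>a<p. cnj ((x(p := t)) a) * M a p) = cnj u" unfolding cu[symmetric] by (intro sum.cong) auto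
  have dne: "M p p \<noteq> 0" using d dr by simp
  have cd: "cnj (M p p) = M p p" using d by simp
  have "bil (Suc p) M (x(p := t)) (x(p := t)) = bil p M x x - cnj u * u / M p p"
    unfolding bil_Suc e1 e2 e3 unfolding t_def u_def[symmetric]
    using dne cd by (simp add: field_simps)
  also have "\<dots> = bil p (\<lambda>a b. M a b - M a p * M p b / M p p) x x"
  proof -
    have "bil p (\<lambda>a b. M a b - M a p * M p b / M p p) x x
       = bil p M x x - (\<Sum>a<p. \<Sum>b<p. (cnj (x a) * M a p) * (M p b * x b)) / M p p"
      unfolding bil_def by (simp add: sum_subtractf sum_divide_distrib algebra_simps)
    also have "(\<Sum>a<p. \<Sum>b<p. (cnj (x a) * M a p) * (M p b * x b)) = (\<Sum>a<p. cnj (x a) * M a p) * u"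
      unfolding u_def by (simp add: sum_product)
    also have "\<dots> = cnj u * u" using cu by simp
    finally show ?thesis by simp
  qed
  finally show ?thesis .
qed

lemma sum_swap_mult:
  fixes f :: "nat \<Rightarrow> nat \<Rightarrow> complex"
  shows
  "(\<Sum>c<p. \<Sum>e<q. f c e * g e) = (\<Sum>e<q. (\<Sum>c<p. f c e) * g e)"
  unfolding sum_distrib_right by (rule sum.swap)

lemma chol:
  fixes M :: "nat\<Rightarrow>nat\<Rightarrow>complex" and \<delta> :: real
  assumes "herm p M" "\<delta> > 0" "\<And>x. \<delta> * (\<Sum>a<p. (cmod (x a))\<^sup>2) \<le> Re (bil p M x x)"
  shows "\<exists>K L. (\<forall>a<p. \<forall>b<p. (\<Sum>c<p. \<Sum>e<p. K a c * M c e * cnj (K b e)) = idm a b)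
     \<and> (\<forall>a<p. \<forall>b<p. (\<Sum>c<p. L a c * K c b) = idm a b)"
  using assms
proof (induction p arbitrary: M)
  case 0
  then show ?case by simp
next
  case (Suc p)
  note h = Suc.prems(1)
  define d where "d = M p p"
  define dr where "dr = Re d"
  have "M p p = cnj (M p p)" using hermD[OF h, of p p] by simp
  then have dreal: "d = of_real dr" unfolding d_def dr_def by (simp add: complex_eq_iff)
  have ddr: "\<delta> \<le> dr"
  proof -
    define x where "x = (\<lambda>a. if a = p then (1::complex) else 0)"
    have "bil (Suc p) M x x = d"
      unfolding bil_def x_def d_def by (simp add: if_distrib cong: if_cong)
    moreover have "(\<Sum>a<Suc p. (cmod (x a))\<^sup>2) = 1"
      unfolding x_def by (simp add: if_distrib cong: if_cong)
    ultimately show ?thesis using Suc.prems(3)[of x] unfolding dr_def by simp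
  qed
  then have drpos: "dr > 0" using Suc.prems(2) by simp
  then have dne: "d \<noteq> 0" using dreal by simp
  define S where "S = (\<lambda>a b. M a b - M a p * M p b / M p p)"
  have hS: "herm p S"
    unfolding herm_def S_def
  proof (intro allI impI)
    fix a b assume ab: "a < p" "b < p"
    have "M b a = cnj (M a b)" "M b p = cnj (M p b)" "M p a = cnj (M a p)"
      using hermD[OF h, of a b] hermD[OF h, of p b] hermD[OF h, of a p] ab by auto
    moreover have "cnj (M p p) = M p p" using dreal unfolding d_def by simp
    ultimately show "M b a - M b p * M p a / M p p = cnj (M a b - M a p * M p b / M p p)"
      by (simp add: mult.commute)
  qed
  have bS: "\<delta> * (\<Sum>a<p. (cmod (x a))\<^sup>2) \<le> Re (bil p S x x)" for x
  proof -
    define t where "t = - (\<Sum>b<p. M p b * x b) / M p p"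
    have eq: "bil (Suc p) M (x(p := t)) (x(p := t)) = bil p S x x"
      unfolding S_def t_def by (rule schur_form[OF h dreal[unfolded d_def] drpos])
    have "(\<Sum>a<p. (cmod (x a))\<^sup>2) = (\<Sum>a<p. (cmod ((x(p := t)) a))\<^sup>2)"
      by (intro sum.cong) auto
    also have "\<dots> \<le> (\<Sum>a<Suc p. (cmod ((x(p := t)) a))\<^sup>2)" by simp
    finally have "\<delta> * (\<Sum>a<p. (cmod (x a))\<^sup>2) \<le> \<delta> * (\<Sum>a<Suc p. (cmod ((x(p := t)) a))\<^sup>2)"
      using Suc.prems(2) by (simp add: mult_left_mono)
    also have "\<dots> \<le> Re (bil (Suc p) M (x(p := t)) (x(p := t)))" by (rule Suc.prems(3))
    also have "\<dots> = Re (bil p S x x)" by (simp only: eq)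
    finally show ?thesis .
  qed
  obtain K L where K: "\<And>a b. a<p \<Longrightarrow> b<p \<Longrightarrow> (\<Sum>c<p. \<Sum>e<p. K a c * S c e * cnj (K b e)) = idm a b"
    and L: "\<And>a b. a<p \<Longrightarrow> b<p \<Longrightarrow> (\<Sum>c<p. L a c * K c b) = idm a b"
    using Suc.IH[OF hS Suc.prems(2) bS] by blast
  define sd where "sd = complex_of_real (sqrt dr)"
  have sdsd: "sd * cnj sd = d" "sd * sd = d" "cnj sd = sd" "sd \<noteq> 0"
    unfolding sd_def dreal using drpos by (simp_all flip: of_real_mult)
  define al where "al = (\<lambda>a. \<Sum>c<p. K a c * M c p)"
  define K' where "K' = (\<lambda>a b. if a < p then (if b < p then K a b else - al a / d)
      else if b = p then 1 / sd else 0)"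
  define L' where "L' = (\<lambda>a b. if b < p then (if a < p then L a b else 0) else M a p / sd)"
  define R where "R = (\<lambda>a e. \<Sum>c<Suc p. K' a c * M c e)"
  have R1: "R a e = (\<Sum>c<p. K a c * S c e)" if "a < p" for a e
  proof -
    have "R a e = (\<Sum>c<p. K a c * M c e) - al a / d * M p e"
      unfolding R_def K'_def using that by simp
    also have "\<dots> = (\<Sum>c<p. K a c * S c e)"
      unfolding S_def al_def d_def
      by (simp add: right_diff_distrib sum_subtractf sum_distrib_left sum_distrib_right sum_divide_distrib algebra_simps)
    finally show ?thesis .
  qed
  have Sp: "S c p = 0" for c unfolding S_def using dne d_def by simp
  have R2: "R p e = M p e / sd" for e unfolding R_def K'_def by simp
  have KK: "(\<Sum>c<Suc p. \<Sum>e<Suc p. K' a c * M c e * cnj (K' b e)) = (\<Sum>e<Suc p. R a e * cnj (K' b e))" for a b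
    unfolding R_def by (rule sum_swap_mult)
  have P1: "(\<Sum>c<Suc p. \<Sum>e<Suc p. K' a c * M c e * cnj (K' b e)) = idm a b" if ab: "a < Suc p" "b < Suc p" for a b
  proof -
    consider "a < p" "b < p" | "a < p" "b = p" | "a = p" "b < p" | "a = p" "b = p" using ab by linarith
    then show ?thesis
    proof cases
      case 1
      have "(\<Sum>e<Suc p. R a e * cnj (K' b e)) = (\<Sum>e<p. (\<Sum>c<p. K a c * S c e) * cnj (K b e))"
        using 1 by (simp add: R1 Sp K'_def)
      also have "\<dots> = idm a b" by (simp only: sum_swap_mult[symmetric] K[OF 1])
      finally show ?thesis using KK by simp
    next
      case 2
      have "(\<Sum>e<Suc p. R a e * cnj (K' b e)) = 0"
        using 2 by (simp add: R1 Sp K'_def)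
      then show ?thesis using KK 2 by (simp add: idm_def)
    next
      case 3
      have c: "(\<Sum>e<p. M p e * cnj (K b e)) = cnj (al b)"
        unfolding al_def cnj_sum
        by (rule sum.cong) (use hermD[OF h, of _ p] in \<open>auto simp: mult.commute\<close>)
      have "(\<Sum>e<Suc p. R a e * cnj (K' b e)) = (\<Sum>e<p. M p e * cnj (K b e)) / sd + (d / sd) * cnj (- al b / d)"
        using 3 by (simp add: R2 K'_def sum_divide_distrib d_def)
      also have "\<dots> = 0" unfolding c using dne dreal sdsd by (simp add: field_simps)
      finally show ?thesis using KK 3 by (simp add: idm_def)
    next
      case 4
      have "(\<Sum>e<Suc p. R a e * cnj (K' b e)) = d / (sd * cnj sd)"
        using 4 by (simp add: R2 K'_def d_def)
      then show ?thesis using KK 4 sdsd dne by (simp add: idm_def)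
    qed
  qed
  have P2: "(\<Sum>c<Suc p. L' a c * K' c b) = idm a b" if ab: "a < Suc p" "b < Suc p" for a b
  proof -
    consider "a < p" "b < p" | "a < p" "b = p" | "a = p" "b < p" | "a = p" "b = p" using ab by linarith
    then show ?thesis
    proof cases
      case 1
      then show ?thesis using L[OF 1] by (simp add: L'_def K'_def)
    next
      case 2
      have s1: "(\<Sum>c<p. L a c * al c) = M a p"
      proof -
        have "(\<Sum>c<p. L a c * al c) = (\<Sum>c<p. \<Sum>e<p. L a c * K c e * M e p)"
          unfolding al_def by (simp add: sum_distrib_left mult.assoc)
        also have "\<dots> = (\<Sum>e<p. idm a e * M e p)"
          by (simp only: sum_swap_mult) (rule sum.cong, auto simp: L 2)
        also have "\<dots> = M a p" using 2 by (simp add: idm_sum)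
        finally show ?thesis .
      qed
      have "(\<Sum>c<Suc p. L' a c * K' c b) = - (\<Sum>c<p. L a c * al c) / d + M a p / (sd * sd)"
        using 2 by (simp add: L'_def K'_def sum_divide_distrib sum_negf)
      then show ?thesis using s1 sdsd dne 2 by (simp add: idm_def)
    next
      case 3
      then show ?thesis by (simp add: L'_def K'_def idm_def)
    next
      case 4
      then show ?thesis using sdsd dne by (simp add: L'_def K'_def idm_def d_def)
    qed
  qed
  show ?case using P1 P2 by blast
qed



definition adv :: "nat \<Rightarrow> (nat\<Rightarrow>nat\<Rightarrow>complex) \<Rightarrow> (nat\<Rightarrow>complex) \<Rightarrow> nat \<Rightarrow> complex" where
  "adv p K x = (\<lambda>c. \<Sum>a<p. cnj (K a c) * x a)"

lemma swap3:
  "(\<Sum>b\<in>B. \<Sum>c\<in>C. \<Sum>e\<in>E. g b c e) = (\<Sum>c\<in>C. \<Sum>e\<in>E. \<Sum>b\<in>B. g b c e)"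
proof -
  have "(\<Sum>b\<in>B. \<Sum>c\<in>C. \<Sum>e\<in>E. g b c e) = (\<Sum>c\<in>C. \<Sum>b\<in>B. \<Sum>e\<in>E. g b c e)"
    by (rule sum.swap)
  also have "\<dots> = (\<Sum>c\<in>C. \<Sum>e\<in>E. \<Sum>b\<in>B. g b c e)"
    by (rule sum.cong[OF refl], rule sum.swap)
  finally show ?thesis .
qed

lemma swap4:
  "(\<Sum>a\<in>A. \<Sum>b\<in>B. \<Sum>c\<in>C. \<Sum>e\<in>E. f a b c e) = (\<Sum>c\<in>C. \<Sum>e\<in>E. \<Sum>a\<in>A. \<Sum>b\<in>B. f a b c e)"
proof -
  have "(\<Sum>a\<in>A. \<Sum>b\<in>B. \<Sum>c\<in>C. \<Sum>e\<in>E. f a b c e) = (\<Sum>a\<in>A. \<Sum>c\<in>C. \<Sum>e\<in>E. \<Sum>b\<in>B. f a b c e)"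
    by (rule sum.cong[OF refl], rule swap3)
  also have "\<dots> = (\<Sum>c\<in>C. \<Sum>e\<in>E. \<Sum>a\<in>A. \<Sum>b\<in>B. f a b c e)"
    by (rule swap3)
  finally show ?thesis .
qed

lemma bil_congr:
  "bil p (\<lambda>a b. \<Sum>c<p. \<Sum>e<p. K a c * M c e * cnj (K b e)) x y = bil p M (adv p K x) (adv p K y)"
proof -
  have "bil p (\<lambda>a b. \<Sum>c<p. \<Sum>e<p. K a c * M c e * cnj (K b e)) x y
      = (\<Sum>a<p. \<Sum>b<p. \<Sum>c<p. \<Sum>e<p. cnj (x a) * K a c * M c e * cnj (K b e) * y b)"
    unfolding bil_def by (simp add: sum_distrib_left sum_distrib_right mult.assoc)
  also have "\<dots> = (\<Sum>c<p. \<Sum>e<p. \<Sum>a<p. \<Sum>b<p. cnj (x a) * K a c * M c e * cnj (K b e) * y b)"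
    by (rule swap4)
  also have "\<dots> = bil p M (adv p K x) (adv p K y)"
    unfolding bil_def adv_def by (simp add: sum_distrib_left sum_distrib_right mult_ac)
  finally show ?thesis .
qed

lemma adv_inv:
  assumes L: "\<And>a b. a<p \<Longrightarrow> b<p \<Longrightarrow> (\<Sum>c<p. L a c * K c b) = idm a b" and a: "a < p"
  shows "adv p K (adv p L x) a = x a"
proof -
  have "adv p K (adv p L x) a = (\<Sum>b<p. \<Sum>c<p. cnj (L c b * K b a) * x c)"
    unfolding adv_def by (simp add: sum_distrib_left mult_ac)
  also have "\<dots> = (\<Sum>c<p. cnj (\<Sum>b<p. L c b * K b a) * x c)"
    by (subst sum.swap) (simp add: sum_distrib_right cnj_sum)
  also have "\<dots> = (\<Sum>c<p. x c * idm c a)"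
    by (rule sum.cong) (auto simp: L a idm_def)
  also have "\<dots> = x a" using a by (rule idm_sum')
  finally show ?thesis .
qed

lemma bil_eq:
  assumes "\<And>a. a<p \<Longrightarrow> x a = x' a" "\<And>a. a<p \<Longrightarrow> y a = y' a"
    "\<And>a b. a<p \<Longrightarrow> b<p \<Longrightarrow> M a b = M' a b"
  shows "bil p M x y = bil p M' x' y'"
  unfolding bil_def using assms by (intro sum.cong) auto

lemma bil_mvr: "bil p M x y = (\<Sum>a<p. cnj (x a) * (\<Sum>b<p. M a b * y b))"
  unfolding bil_def by (simp add: sum_distrib_left mult.assoc)

lemma bil_mvl: assumes "herm p M"
  shows "bil p M x y = (\<Sum>b<p. cnj (\<Sum>a<p. M b a * x a) * y b)"
proof -
  have "bil p M x y = (\<Sum>b<p. (\<Sum>a<p. cnj (x a) * M a b) * y b)"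
    unfolding bil_def by (subst sum.swap) (simp add: sum_distrib_right)
  also have "\<dots> = (\<Sum>b<p. cnj (\<Sum>a<p. M b a * x a) * y b)"
  proof (rule sum.cong[OF refl])
    fix b assume b: "b \<in> {..<p}"
    have "(\<Sum>a<p. cnj (x a) * M a b) = cnj (\<Sum>a<p. M b a * x a)"
      unfolding cnj_sum
    proof (rule sum.cong[OF refl])
      fix a assume "a \<in> {..<p}"
      then have "M a b = cnj (M b a)" using hermD[OF assms, of b a] b by simp
      then show "cnj (x a) * M a b = cnj (M b a * x a)" by (simp add: mult.commute)
    qed
    then show "(\<Sum>a<p. cnj (x a) * M a b) * y b = cnj (\<Sum>a<p. M b a * x a) * y b" by simp
  qed
  finally show ?thesis .
qed

lemma cnj_mult_nonneg: "0 \<le> cnj (z::complex) * z"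
  by (simp add: less_eq_complex_def)

lemma nsq_nonneg: "0 \<le> (\<Sum>a<p. cnj (w a) * w a)"
  by (rule sum_nonneg) (rule cnj_mult_nonneg)

lemma bil_idm: "bil p idm x y = (\<Sum>a<p. cnj (x a) * y a)"
  unfolding bil_mvr by (rule sum.cong) (auto simp: idm_sum)

lemma psd_bil: "psd_on {..<m} M = (\<forall>v. 0 \<le> bil m M v v)"
  by (simp add: psd_on_def bil_def)

lemma bil_TT:
  "bil m (\<lambda>a b. (if a = b then 1 else 0) - (\<Sum>c<m. cnj (T c a) * T c b)) y y
   = bil m idm y y - (\<Sum>c<m. cnj (\<Sum>b<m. T c b * y b) * (\<Sum>b<m. T c b * y b))"
proof -
  have "bil m (\<lambda>a b. (if a = b then 1 else 0) - (\<Sum>c<m. cnj (T c a) * T c b)) y y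
     = bil m idm y y - (\<Sum>a<m. \<Sum>b<m. \<Sum>c<m. cnj (y a) * cnj (T c a) * T c b * y b)"
    unfolding bil_def idm_def
    by (simp add: sum_subtractf right_diff_distrib left_diff_distrib sum_distrib_left sum_distrib_right mult.assoc)
  also have "(\<Sum>a<m. \<Sum>b<m. \<Sum>c<m. cnj (y a) * cnj (T c a) * T c b * y b)
      = (\<Sum>c<m. \<Sum>a<m. \<Sum>b<m. cnj (y a) * cnj (T c a) * T c b * y b)"
    by (rule trans[OF swap3 swap3])
  also have "\<dots> = (\<Sum>c<m. cnj (\<Sum>b<m. T c b * y b) * (\<Sum>b<m. T c b * y b))"
    by (simp add: cnj_sum sum_product mult_ac) (rule sum.cong[OF refl], rule sum.swap)
  finally show ?thesis .
qed

lemma sac_blk: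
  assumes T: "selfadj_contraction m T"
  shows "0 \<le> bil m idm x x + bil m idm y y + bil m T x y + bil m T y x"
proof -
  have h: "herm m T" using T unfolding selfadj_contraction_def herm_def by blast
  define z where "z = (\<lambda>a. \<Sum>b<m. T a b * y b)"
  have ps: "0 \<le> bil m idm y y - (\<Sum>c<m. cnj (z c) * z c)"
    using T unfolding selfadj_contraction_def psd_bil bil_TT z_def by blast
  have e1: "bil m T x y = (\<Sum>a<m. cnj (x a) * z a)" unfolding bil_mvr z_def ..
  have e2: "bil m T y x = (\<Sum>a<m. cnj (z a) * x a)" unfolding bil_mvl[OF h] z_def ..
  have nn: "0 \<le> (\<Sum>a<m. cnj (x a + z a) * (x a + z a))" by (rule nsq_nonneg)
  have "(\<Sum>a<m. cnj (x a + z a) * (x a + z a)) = bil m idm x x + bil m T x y + bil m T y x + (\<Sum>c<m. cnj (z c) * z c)"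
    unfolding e1 e2 bil_idm by (simp add: sum.distrib algebra_simps)
  then have "bil m idm x x + bil m idm y y + bil m T x y + bil m T y x
     = (bil m idm y y - (\<Sum>c<m. cnj (z c) * z c)) + (\<Sum>a<m. cnj (x a + z a) * (x a + z a))"
    by simp
  also have "0 \<le> \<dots>" using ps nn by simp
  finally show ?thesis by simp
qed

lemma blk_sac:
  assumes h: "herm m C" and b: "\<And>x y. 0 \<le> bil m idm x x + bil m idm y y + bil m C x y + bil m C y x"
  shows "selfadj_contraction m C"
  unfolding selfadj_contraction_def psd_bil
proof (rule conjI)
  show "\<forall>a<m. \<forall>b<m. C b a = cnj (C a b)" using h unfolding herm_def .
  show "\<forall>v. 0 \<le> bil m (\<lambda>a b. (if a = b then 1 else 0) - (\<Sum>c<m. cnj (C c a) * C c b)) v v"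
  proof
  fix v
  define z where "z = (\<lambda>a. \<Sum>b<m. C a b * v b)"
  define y where "y = (\<lambda>a. - z a)"
  have e1: "bil m C v y = - (\<Sum>a<m. cnj (z a) * z a)"
    unfolding bil_mvl[OF h] z_def y_def by (simp add: sum_negf)
  have e2: "bil m C y v = - (\<Sum>a<m. cnj (z a) * z a)"
    unfolding bil_mvr z_def y_def by (simp add: sum_negf)
  have e3: "bil m idm y y = (\<Sum>a<m. cnj (z a) * z a)"
    unfolding bil_idm y_def by simp
  have "bil m (\<lambda>a b. (if a = b then 1 else 0) - (\<Sum>c<m. cnj (C c a) * C c b)) v v
     = bil m idm v v + bil m idm y y + bil m C v y + bil m C y v"
    unfolding bil_TT e1 e2 e3 z_def by simp
  then show "0 \<le> bil m (\<lambda>a b. (if a = b then 1 else 0) - (\<Sum>c<m. cnj (C c a) * C c b)) v v"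
    using b by simp
  qed
qed



definition G :: "nat \<Rightarrow> nat \<Rightarrow> (nat\<Rightarrow>nat\<Rightarrow>complex) \<Rightarrow> (nat\<Rightarrow>nat\<Rightarrow>complex) \<Rightarrow> (nat \<Rightarrow> nat \<Rightarrow> complex) \<Rightarrow> complex" where
  "G q m A B V = (\<Sum>r<q. \<Sum>s<q. A r s * bil m B (V r) (V s))"

lemma sum_prod_split: "(\<Sum>x\<in>A \<times> B. f x) = (\<Sum>a\<in>A. \<Sum>b\<in>B. f (a, b))"
  by (simp add: sum.cartesian_product)

lemma swap_front4:
  "(\<Sum>r\<in>R. \<Sum>s\<in>S. \<Sum>a\<in>A. \<Sum>b\<in>B. \<Sum>i\<in>I. f r s a b i) = (\<Sum>i\<in>I. \<Sum>r\<in>R. \<Sum>s\<in>S. \<Sum>a\<in>A. \<Sum>b\<in>B. f r s a b i)"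
  by (simp only: sum.swap[where B=I])

lemma prodsum:
  "(\<Sum>x\<in>{..<q} \<times> {..<m}. \<Sum>y\<in>{..<q} \<times> {..<m}. cnj (v x) *
      (case x of (r, a) \<Rightarrow> \<lambda>(s, b). \<Sum>i\<in>I. A i r s * B i a b) y * v y)
   = (\<Sum>i\<in>I. G q m (A i) (B i) (\<lambda>r a. v (r, a)))"
proof -
  have "(\<Sum>x\<in>{..<q} \<times> {..<m}. \<Sum>y\<in>{..<q} \<times> {..<m}. cnj (v x) *
      (case x of (r, a) \<Rightarrow> \<lambda>(s, b). \<Sum>i\<in>I. A i r s * B i a b) y * v y)
    = (\<Sum>r<q. \<Sum>a<m. \<Sum>s<q. \<Sum>b<m. cnj (v (r,a)) * (\<Sum>i\<in>I. A i r s * B i a b) * v (s,b))"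
    by (simp only: sum_prod_split) simp
  also have "\<dots> = (\<Sum>r<q. \<Sum>s<q. \<Sum>a<m. \<Sum>b<m. cnj (v (r,a)) * (\<Sum>i\<in>I. A i r s * B i a b) * v (s,b))"
    by (rule sum.cong[OF refl], rule sum.swap)
  also have "\<dots> = (\<Sum>r<q. \<Sum>s<q. \<Sum>a<m. \<Sum>b<m. \<Sum>i\<in>I. A i r s * (cnj (v (r,a)) * B i a b * v (s,b)))"
    by (simp add: sum_distrib_left sum_distrib_right mult_ac)
  also have "\<dots> = (\<Sum>i\<in>I. \<Sum>r<q. \<Sum>s<q. \<Sum>a<m. \<Sum>b<m. A i r s * (cnj (v (r,a)) * B i a b * v (s,b)))"
    by (rule swap_front4)
  also have "\<dots> = (\<Sum>i\<in>I. G q m (A i) (B i) (\<lambda>r a. v (r, a)))"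
    unfolding G_def bil_def by (simp add: sum_distrib_left)
  finally show ?thesis .
qed

lemma KL:
  "psd_on ({..<q} \<times> {..<m}) (\<lambda>(r, a) (s, b). \<Sum>i\<in>I. A i r s * B i a b)
   \<longleftrightarrow> (\<forall>V. 0 \<le> (\<Sum>i\<in>I. G q m (A i) (B i) V))"
proof
  assume "psd_on ({..<q} \<times> {..<m}) (\<lambda>(r, a) (s, b). \<Sum>i\<in>I. A i r s * B i a b)"
  then have "\<And>v. 0 \<le> (\<Sum>i\<in>I. G q m (A i) (B i) (\<lambda>r a. v (r, a)))"
    unfolding psd_on_def prodsum by blast
  from this[of "\<lambda>(r,a). V r a" for V] show "\<forall>V. 0 \<le> (\<Sum>i\<in>I. G q m (A i) (B i) V)" by simp
next
  assume "\<forall>V. 0 \<le> (\<Sum>i\<in>I. G q m (A i) (B i) V)"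
  then show "psd_on ({..<q} \<times> {..<m}) (\<lambda>(r, a) (s, b). \<Sum>i\<in>I. A i r s * B i a b)"
    unfolding psd_on_def prodsum by blast
qed



lemma blkform_eq:
  "(\<Sum>x\<in>{..<p} \<times> {..<2::nat}. \<Sum>y\<in>{..<p} \<times> {..<2::nat}. cnj (v x) *
      (case x of (r, i) \<Rightarrow> \<lambda>(s, j). X r s * (if i = j then 1 else 0) + Y r s * (if i \<noteq> j then 1 else 0)) y * v y)
   = bil p X (\<lambda>r. v (r,0)) (\<lambda>r. v (r,0)) + bil p X (\<lambda>r. v (r,1)) (\<lambda>r. v (r,1))
     + bil p Y (\<lambda>r. v (r,0)) (\<lambda>r. v (r,1)) + bil p Y (\<lambda>r. v (r,1)) (\<lambda>r. v (r,0))"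
  by (simp only: sum_prod_split) (simp add: numeral_2_eq_2 bil_def sum.distrib algebra_simps)

lemma blkform:
  "psd_on ({..<p} \<times> {..<2::nat}) (\<lambda>(r, i) (s, j). X r s * (if i = j then 1 else 0) + Y r s * (if i \<noteq> j then 1 else 0))
   \<longleftrightarrow> (\<forall>x y. 0 \<le> bil p X x x + bil p X y y + bil p Y x y + bil p Y y x)"
proof
  assume a: "psd_on ({..<p} \<times> {..<2::nat}) (\<lambda>(r, i) (s, j). X r s * (if i = j then 1 else 0) + Y r s * (if i \<noteq> j then 1 else 0))"
  show "\<forall>x y. 0 \<le> bil p X x x + bil p X y y + bil p Y x y + bil p Y y x"
  proof (intro allI)
    fix x y
    have A: "\<forall>v::nat\<times>nat\<Rightarrow>complex. 0 \<le> bil p X (\<lambda>r. v (r, 0)) (\<lambda>r. v (r, 0)) + bil p X (\<lambda>r. v (r, 1)) (\<lambda>r. v (r, 1))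
           + bil p Y (\<lambda>r. v (r, 0)) (\<lambda>r. v (r, 1)) + bil p Y (\<lambda>r. v (r, 1)) (\<lambda>r. v (r, 0))"
      using a unfolding psd_on_def blkform_eq .
    show "0 \<le> bil p X x x + bil p X y y + bil p Y x y + bil p Y y x"
      using spec[OF A, of "\<lambda>(r,i). if i = 0 then x r else y r"] by simp
  qed
next
  assume "\<forall>x y. 0 \<le> bil p X x x + bil p X y y + bil p Y x y + bil p Y y x"
  then show "psd_on ({..<p} \<times> {..<2::nat}) (\<lambda>(r, i) (s, j). X r s * (if i = j then 1 else 0) + Y r s * (if i \<noteq> j then 1 else 0))"
    unfolding psd_on_def blkform_eq by blast
qed

lemma sum_if_r: "(\<Sum>b<(p::nat). f b * (if b = c then \<beta> else 0)) = (if c < p then f c * \<beta> else (0::complex))"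
proof -
  have "(\<Sum>b<p. f b * (if b = c then \<beta> else 0)) = (\<Sum>b<p. (if b = c then f b * \<beta> else 0))"
    by (rule sum.cong) auto
  also have "\<dots> = (if c < p then f c * \<beta> else 0)" by simp
  finally show ?thesis .
qed

lemma bil_delta:
  assumes "a < p" "b < p"
  shows "bil p M (\<lambda>c. if c = a then \<alpha> else 0) (\<lambda>c. if c = b then \<beta> else 0) = cnj \<alpha> * M a b * \<beta>"
proof -
  have i: "\<And>c. (\<Sum>e<p. M c e * (if e = b then \<beta> else 0)) = M c b * \<beta>"
    using assms by (simp add: sum_if_r)
  have "bil p M (\<lambda>c. if c = a then \<alpha> else 0) (\<lambda>c. if c = b then \<beta> else 0)
     = (\<Sum>c<p. (M c b * \<beta>) * (if c = a then cnj \<alpha> else 0))"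
    unfolding bil_mvr i by (rule sum.cong) (auto simp: mult.commute)
  also have "\<dots> = cnj \<alpha> * M a b * \<beta>" using assms by (simp add: sum_if_r)
  finally show ?thesis .
qed

lemma polar:
  assumes "\<And>x y. Im (bil p M x y + bil p M y x) = 0"
  shows "herm p M"
  unfolding herm_def
proof (intro allI impI)
  fix a b assume ab: "a < p" "b < p"
  have 1: "Im (M a b + M b a) = 0"
    using assms[of "\<lambda>c. if c = a then 1 else 0" "\<lambda>c. if c = b then 1 else 0"] ab by (simp add: bil_delta)
  have 2: "Im (M a b * \<i> + cnj \<i> * M b a) = 0"
    using assms[of "\<lambda>c. if c = a then 1 else 0" "\<lambda>c. if c = b then \<i> else 0"] ab
    by (simp add: bil_delta[of a p b] bil_delta[of b p a])
  show "M b a = cnj (M a b)" using 1 2 by (simp add: complex_eq_iff)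
qed



lemma bil_addM: "bil p (\<lambda>a b. M a b + N a b) x y = bil p M x y + bil p N x y"
  unfolding bil_def by (simp add: sum.distrib algebra_simps)

lemma bil_scaleM: "bil p (\<lambda>a b. s * M a b) x y = s * bil p M x y"
  unfolding bil_def by (simp add: sum_distrib_left algebra_simps)

lemma bil_addv: "bil p M (\<lambda>a. x a + y a) (\<lambda>a. x a + y a) = bil p M x x + bil p M y y + bil p M x y + bil p M y x"
  unfolding bil_def by (simp add: sum.distrib algebra_simps)

lemma bil_zero1: "bil p M (\<lambda>_. 0) y = 0" unfolding bil_def by simp
lemma bil_zero2: "bil p M x (\<lambda>_. 0) = 0" unfolding bil_def by simp

lemma herm_idm: "herm p idm" unfolding herm_def idm_def by simp

lemma herm_add: assumes "herm p M" "herm p N" shows "herm p (\<lambda>a b. M a b + N a b)"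
  unfolding herm_def
proof (intro allI impI)
  fix a b assume "a<p" "b<p"
  then have "M b a = cnj (M a b)" "N b a = cnj (N a b)" using hermD assms by blast+
  then show "M b a + N b a = cnj (M a b + N a b)" by simp
qed

lemma herm_scale: assumes "herm p M" shows "herm p (\<lambda>a b. of_real s * M a b)"
  unfolding herm_def
proof (intro allI impI)
  fix a b assume "a<p" "b<p"
  then have "M b a = cnj (M a b)" using hermD assms by blast
  then show "of_real s * M b a = cnj (of_real s * M a b)" by simp
qed

lemma herm_congr:
  assumes h: "herm p M"
  shows "herm p (\<lambda>a b. \<Sum>c<p. \<Sum>e<p. K a c * M c e * cnj (K b e))"
  unfolding herm_def
proof (intro allI impI)
  fix a b assume "a < p" "b < p"
  have "cnj (\<Sum>c<p. \<Sum>e<p. K a c * M c e * cnj (K b e)) = (\<Sum>c<p. \<Sum>e<p. cnj (K a c) * cnj (M c e) * K b e)"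
    by (simp add: cnj_sum)
  also have "\<dots> = (\<Sum>e<p. \<Sum>c<p. cnj (K a c) * cnj (M c e) * K b e)" by (rule sum.swap)
  also have "\<dots> = (\<Sum>e<p. \<Sum>c<p. K b e * M e c * cnj (K a c))"
  proof (intro sum.cong refl)
    fix e c assume "e \<in> {..<p}" "c \<in> {..<p}"
    then have "M e c = cnj (M c e)" using hermD[OF h, of c e] by simp
    then show "cnj (K a c) * cnj (M c e) * K b e = K b e * M e c * cnj (K a c)" by simp
  qed
  finally show "(\<Sum>c<p. \<Sum>e<p. K b c * M c e * cnj (K a e)) = cnj (\<Sum>c<p. \<Sum>e<p. K a c * M c e * cnj (K b e))"
    by simp
qed

lemma eps_lemma:
  fixes z c :: complex
  assumes "\<And>\<epsilon>. \<epsilon> > 0 \<Longrightarrow> 0 \<le> z + of_real \<epsilon> * c"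
  shows "0 \<le> z"
proof -
  have 1: "Im z + Im c = 0" "0 \<le> Re z + Re c" using assms[of 1] by (auto simp: less_eq_complex_def)
  have 2: "Im z + 2 * Im c = 0" using assms[of 2] by (auto simp: less_eq_complex_def)
  have im: "Im z = 0" using 1 2 by linarith
  have "0 \<le> Re z"
  proof (rule ccontr)
    assume neg: "\<not> 0 \<le> Re z"
    then have rc: "Re c > 0" using 1 by linarith
    define e where "e = - Re z / (2 * Re c)"
    have e: "e > 0" unfolding e_def using neg rc by (simp add: divide_neg_pos)
    have "0 \<le> Re z + e * Re c" using assms[OF e] by (auto simp: less_eq_complex_def)
    also have "e * Re c = - Re z / 2" unfolding e_def using rc by (simp add: field_simps)
    finally show False using neg by linarith
  qed
  then show ?thesis using im by (simp add: less_eq_complex_def)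
qed

lemma Re_cnj_sq: "Re (cnj z * z) = (cmod z)\<^sup>2"
  using complex_norm_square[of z] by (metis Re_complex_of_real mult.commute)



definition cc :: "nat \<Rightarrow> nat \<Rightarrow> nat \<Rightarrow> nat \<Rightarrow> complex" where
  "cc l k i j = (if l = 0 then (if i = j then 1 else 0) else if l = k \<and> i \<noteq> j then 1 else 0)"

lemma linm:
  assumes k: "k \<in> {1..n}"
  shows "lin_map n cc f k i j = f 0 * (if i = j then 1 else 0) + f k * (if i \<noteq> j then 1 else 0)"
proof -
  have "\<And>l. f l * cc l k i j = (if l = 0 then f 0 * (if i = j then 1 else 0) else 0)
        + (if l = k then f k * (if i \<noteq> j then 1 else 0) else 0)"
    using k unfolding cc_def by auto
  then have "lin_map n cc f k i j = (\<Sum>l\<le>n. (if l = 0 then f 0 * (if i = j then 1 else 0) else 0))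
        + (\<Sum>l\<le>n. (if l = k then f k * (if i \<noteq> j then 1 else 0) else 0))"
    unfolding lin_map_def by (simp add: sum.distrib)
  also have "\<dots> = f 0 * (if i = j then 1 else 0) + f k * (if i \<noteq> j then 1 else 0)"
    using k by simp
  finally show ?thesis .
qed

lemma dsum_iff:
  "dsum_pos n p (lin_map_ampl n cc B) \<longleftrightarrow>
   (\<forall>k\<in>{1..n}. \<forall>x y. 0 \<le> bil p (B 0) x x + bil p (B 0) y y + bil p (B k) x y + bil p (B k) y x)"
proof -
  have "\<And>k. k \<in> {1..n} \<Longrightarrow> (\<lambda>(r, i) (s, j). lin_map_ampl n cc B k r s i j)
      = (\<lambda>(r, i) (s, j). B 0 r s * (if i = j then 1 else 0) + B k r s * (if i \<noteq> j then 1 else 0))"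
    unfolding lin_map_ampl_def by (simp add: linm)
  then show ?thesis unfolding dsum_pos_def using blkform by simp
qed

definition TT :: "(nat \<Rightarrow> nat \<Rightarrow> nat \<Rightarrow> complex) \<Rightarrow> nat \<Rightarrow> nat \<Rightarrow> nat \<Rightarrow> complex" where
  "TT T i = (if i = 0 then idm else T i)"

lemma nc_iff:
  "nc_pos n q A \<longleftrightarrow> (\<forall>m T. (\<forall>i\<in>{1..n}. selfadj_contraction m (T i)) \<longrightarrow>
      (\<forall>V. 0 \<le> (\<Sum>i\<le>n. G q m (A i) (TT T i) V)))"
proof -
  have eq: "\<And>m T. (\<lambda>(r, a) (s, b). A 0 r s * (if a = b then 1 else 0) + (\<Sum>i\<in>{1..n}. A i r s * T i a b))
     = (\<lambda>(r, a) (s, b). \<Sum>i\<le>n. A i r s * TT T i a b)"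
  proof -
    fix m T
    have e: "{..n} = insert 0 {1..n}" by auto
    have "\<And>r s a b. (\<Sum>i\<le>n. A i r s * TT T i a b) = A 0 r s * (if a = b then 1 else 0) + (\<Sum>i\<in>{1..n}. A i r s * T i a b)"
      unfolding e by (simp add: TT_def idm_def)
    then show "(\<lambda>(r, a) (s, b). A 0 r s * (if a = b then 1 else 0) + (\<Sum>i\<in>{1..n}. A i r s * T i a b))
     = (\<lambda>(r, a) (s, b). \<Sum>i\<le>n. A i r s * TT T i a b)" by simp
  qed
  show ?thesis unfolding nc_pos_def by (simp only: eq KL)
qed

lemma dual_iff:
  "dual_pos n p B \<longleftrightarrow> (\<forall>q A. nc_pos n q A \<longrightarrow> (\<forall>V. 0 \<le> (\<Sum>i\<le>n. G q p (A i) (B i) V)))"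
  unfolding dual_pos_def KL ..

definition off :: "nat \<Rightarrow> nat \<Rightarrow> complex" where "off r s = (if r \<noteq> s then 1 else 0)"
definition Aw :: "nat \<Rightarrow> nat \<Rightarrow> nat \<Rightarrow> nat \<Rightarrow> complex" where
  "Aw k i = (if i = 0 then idm else if i = k then off else (\<lambda>_ _. 0))"

lemma G_zero: "G q m (\<lambda>_ _. 0) F V = 0" by (simp add: G_def)

lemma Gsum:
  assumes k: "k \<in> {1..n}"
  shows "(\<Sum>i\<le>n. G q m (Aw k i) (F i) V) = G q m idm (F 0) V + G q m off (F k) V"
proof -
  have "\<And>i. G q m (Aw k i) (F i) V = (if i = 0 then G q m idm (F 0) V else 0) + (if i = k then G q m off (F k) V else 0)"
    using k unfolding Aw_def by (auto simp: G_zero)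
  then have "(\<Sum>i\<le>n. G q m (Aw k i) (F i) V) = (\<Sum>i\<le>n. (if i = 0 then G q m idm (F 0) V else 0)) + (\<Sum>i\<le>n. (if i = k then G q m off (F k) V else 0))"
    by (simp add: sum.distrib)
  also have "\<dots> = G q m idm (F 0) V + G q m off (F k) V" using k by simp
  finally show ?thesis .
qed

lemma G2_idm: "G 2 m idm F V = bil m F (V 0) (V 0) + bil m F (V 1) (V 1)"
  unfolding G_def idm_def by (simp add: numeral_2_eq_2)

lemma G2_off: "G 2 m off F V = bil m F (V 0) (V 1) + bil m F (V 1) (V 0)"
  unfolding G_def off_def by (simp add: numeral_2_eq_2)

lemma fwd:
  assumes d: "dual_pos n p B" and k: "k \<in> {1..n}"
  shows "0 \<le> bil p (B 0) x x + bil p (B 0) y y + bil p (B k) x y + bil p (B k) y x"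
proof -
  have nc: "nc_pos n 2 (Aw k)"
    unfolding nc_iff
  proof (intro allI impI)
    fix m T V assume T: "\<forall>i\<in>{1..n}. selfadj_contraction m (T i)"
    have "(\<Sum>i\<le>n. G 2 m (Aw k i) (TT T i) V) = bil m idm (V 0) (V 0) + bil m idm (V 1) (V 1)
        + (bil m (T k) (V 0) (V 1) + bil m (T k) (V 1) (V 0))"
      unfolding Gsum[OF k] G2_idm G2_off using k by (simp add: TT_def)
    also have "0 \<le> \<dots>" using sac_blk[of m "T k" "V 0" "V 1"] T k by (simp add: add.assoc)
    finally show "0 \<le> (\<Sum>i\<le>n. G 2 m (Aw k i) (TT T i) V)" .
  qed
  have "0 \<le> (\<Sum>i\<le>n. G 2 p (Aw k i) (B i) (\<lambda>r. if r = 0 then x else y))"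
    using d nc unfolding dual_iff by blast
  also have "(\<Sum>i\<le>n. G 2 p (Aw k i) (B i) (\<lambda>r. if r = 0 then x else y))
     = bil p (B 0) x x + bil p (B 0) y y + bil p (B k) x y + bil p (B k) y x"
    unfolding Gsum[OF k] G2_idm G2_off by simp
  finally show ?thesis .
qed

lemma bwd:
  assumes n: "1 \<le> n"
    and blk: "\<And>k x y. k \<in> {1..n} \<Longrightarrow> 0 \<le> bil p (B 0) x x + bil p (B 0) y y + bil p (B k) x y + bil p (B k) y x"
  shows "dual_pos n p B"
  unfolding dual_iff
proof (intro allI impI)
  fix q A V assume nc: "nc_pos n q A"
  have k1: "1 \<in> {1..n}" using n by simp
  have B0pos: "0 \<le> bil p (B 0) z z" for z
    using blk[OF k1, of z "\<lambda>_. 0"] by (simp add: bil_zero1 bil_zero2)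
  have B0im: "Im (bil p (B 0) z z) = 0" for z using B0pos[of z] by (simp add: less_eq_complex_def)
  have hB0: "herm p (B 0)"
  proof (rule polar)
    fix x y
    have "Im (bil p (B 0) (\<lambda>a. x a + y a) (\<lambda>a. x a + y a)) = 0" by (rule B0im)
    then show "Im (bil p (B 0) x y + bil p (B 0) y x) = 0" unfolding bil_addv using B0im[of x] B0im[of y] by simp
  qed
  have hBk: "herm p (B k)" if k: "k \<in> {1..n}" for k
  proof (rule polar)
    fix x y
    have "Im (bil p (B 0) x x + bil p (B 0) y y + bil p (B k) x y + bil p (B k) y x) = 0"
      using blk[OF k, of x y] by (simp add: less_eq_complex_def)
    then show "Im (bil p (B k) x y + bil p (B k) y x) = 0" using B0im[of x] B0im[of y] by simp
  qed
  define Z where "Z = (\<Sum>i\<le>n. G q p (A i) (B i) V)"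
  show "0 \<le> (\<Sum>i\<le>n. G q p (A i) (B i) V)"
    unfolding Z_def[symmetric]
  proof (rule eps_lemma)
    fix \<epsilon> :: real assume eps: "\<epsilon> > 0"
    define B0' where "B0' = (\<lambda>a b. B 0 a b + of_real \<epsilon> * idm a b)"
    define Bp where "Bp = (\<lambda>i. if i = 0 then B0' else B i)"
    have hB0': "herm p B0'" unfolding B0'_def by (intro herm_add hB0 herm_scale herm_idm)
    have bB0': "bil p B0' x y = bil p (B 0) x y + of_real \<epsilon> * bil p idm x y" for x y
      unfolding B0'_def bil_addM bil_scaleM ..
    have pd: "\<epsilon> * (\<Sum>a<p. (cmod (x a))\<^sup>2) \<le> Re (bil p B0' x x)" for x
    proof -
      have "Re (bil p idm x x) = (\<Sum>a<p. (cmod (x a))\<^sup>2)" unfolding bil_idm by (simp only: Re_sum Re_cnj_sq)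
      moreover have "0 \<le> Re (bil p (B 0) x x)" using B0pos[of x] by (simp add: less_eq_complex_def)
      ultimately show ?thesis unfolding bB0' by simp
    qed
    obtain K L where K: "\<And>a b. a<p \<Longrightarrow> b<p \<Longrightarrow> (\<Sum>c<p. \<Sum>e<p. K a c * B0' c e * cnj (K b e)) = idm a b"
      and L: "\<And>a b. a<p \<Longrightarrow> b<p \<Longrightarrow> (\<Sum>c<p. L a c * K c b) = idm a b"
      using chol[OF hB0' eps pd] by blast
    define C where "C = (\<lambda>i a b. \<Sum>c<p. \<Sum>e<p. K a c * Bp i c e * cnj (K b e))"
    have C0: "C 0 a b = idm a b" if "a < p" "b < p" for a b unfolding C_def Bp_def using K that by simp
    have bilC: "bil p (C i) x y = bil p (Bp i) (adv p K x) (adv p K y)" for i x y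
      unfolding C_def by (rule bil_congr)
    have bidm: "bil p idm x y = bil p (C 0) x y" for x y by (rule bil_eq) (auto simp: C0)
    have sacC: "selfadj_contraction p (C i)" if i: "i \<in> {1..n}" for i
    proof (rule blk_sac)
      show "herm p (C i)" unfolding C_def using i by (simp add: Bp_def herm_congr hBk)
      fix x y
      define u where "u = adv p K x"
      define w where "w = adv p K y"
      have "bil p idm x x + bil p idm y y + bil p (C i) x y + bil p (C i) y x
         = (bil p (B 0) u u + bil p (B 0) w w + bil p (B i) u w + bil p (B i) w u)
           + of_real \<epsilon> * (bil p idm u u + bil p idm w w)"
      proof -
        have e1: "bil p idm x x = bil p B0' u u" unfolding bidm bilC u_def by (simp add: Bp_def)
        have e2: "bil p idm y y = bil p B0' w w" unfolding bidm bilC w_def by (simp add: Bp_def)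
        have e3: "bil p (C i) x y = bil p (B i) u w" unfolding bilC u_def w_def using i by (simp add: Bp_def)
        have e4: "bil p (C i) y x = bil p (B i) w u" unfolding bilC u_def w_def using i by (simp add: Bp_def)
        show ?thesis unfolding e1 e2 e3 e4 bB0' by (simp add: algebra_simps)
      qed
      also have "0 \<le> \<dots>"
      proof (rule add_nonneg_nonneg)
        show "0 \<le> bil p (B 0) u u + bil p (B 0) w w + bil p (B i) u w + bil p (B i) w u" by (rule blk[OF i])
        show "0 \<le> of_real \<epsilon> * (bil p idm u u + bil p idm w w)"
          using eps unfolding bil_idm
          by (intro mult_nonneg_nonneg add_nonneg_nonneg nsq_nonneg) (simp add: less_eq_complex_def)
      qed
      finally show "0 \<le> bil p idm x x + bil p idm y y + bil p (C i) x y + bil p (C i) y x" .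
    qed
    define W where "W = (\<lambda>r. adv p L (V r))"
    have ncC: "0 \<le> (\<Sum>i\<le>n. G q p (A i) (TT C i) W)"
      using nc sacC unfolding nc_iff by blast
    have eqW: "(\<Sum>i\<le>n. G q p (A i) (TT C i) W) = (\<Sum>i\<le>n. G q p (A i) (Bp i) V)"
    proof (rule sum.cong[OF refl])
      fix i assume "i \<in> {..n}"
      have bb: "bil p (TT C i) (W r) (W s) = bil p (Bp i) (V r) (V s)" for r s
      proof -
        have "bil p (TT C i) (W r) (W s) = bil p (C i) (W r) (W s)"
          by (cases "i = 0") (auto simp: TT_def bidm)
        also have "\<dots> = bil p (Bp i) (adv p K (W r)) (adv p K (W s))" by (rule bilC)
        also have "\<dots> = bil p (Bp i) (V r) (V s)"
          unfolding W_def by (rule bil_eq) (auto simp: adv_inv[OF L])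
        finally show ?thesis .
      qed
      show "G q p (A i) (TT C i) W = G q p (A i) (Bp i) V" unfolding G_def bb ..
    qed
    have G0: "G q p (A 0) B0' V = G q p (A 0) (B 0) V + of_real \<epsilon> * G q p (A 0) idm V"
      unfolding G_def bB0' by (simp add: sum.distrib sum_distrib_left algebra_simps)
    have "\<And>i. G q p (A i) (Bp i) V = G q p (A i) (B i) V + (if i = 0 then of_real \<epsilon> * G q p (A 0) idm V else 0)"
      unfolding Bp_def using G0 by simp
    then have eqB: "(\<Sum>i\<le>n. G q p (A i) (Bp i) V) = Z + of_real \<epsilon> * G q p (A 0) idm V"
      unfolding Z_def by (simp add: sum.distrib)
    show "0 \<le> Z + of_real \<epsilon> * G q p (A 0) idm V" using ncC eqW eqB by simp
  qed
qed

theorem proposition5p13: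
  fixes n :: nat
  assumes "n \<ge> 2"
  shows "\<exists>c. compl_order_iso_dual_W n c"
proof (intro exI)
  have n1: "1 \<le> n" using assms by simp
  have k1: "1 \<in> {1..n}" using n1 by simp
  show "compl_order_iso_dual_W n cc"
    unfolding compl_order_iso_dual_W_def
  proof (intro conjI)
    show "\<forall>f. in_W n (lin_map n cc f)" unfolding in_W_def by (simp add: linm)
  next
    show "\<forall>w. in_W n w \<longrightarrow> (\<exists>f. \<forall>k\<in>{1..n}. \<forall>i<2. \<forall>j<2. lin_map n cc f k i j = w k i j)"
    proof (intro allI impI)
    fix w assume w: "in_W n w"
    define f where "f = (\<lambda>l. if l = 0 then w 1 0 0 else w l 0 1)"
    show "\<exists>f. \<forall>k\<in>{1..n}. \<forall>i<2. \<forall>j<2. lin_map n cc f k i j = w k i j"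
    proof (intro exI ballI allI impI)
      fix k i j assume k: "k \<in> {1..n}" and ij: "i < (2::nat)" "j < (2::nat)"
      have z2: "(0::nat) < 2" by simp
      have diag: "w k i i = w 1 0 0" using w k k1 ij z2 unfolding in_W_def by blast
      have offd: "w k 0 1 = w k 1 0" using w k unfolding in_W_def by blast
      have "k \<noteq> 0" using k by simp
      then show "lin_map n cc f k i j = w k i j"
        unfolding linm[OF k] f_def using ij diag offd
        by (cases "i = j") (auto simp: less_2_cases_iff)
    qed
    qed
  next
    show "\<forall>f. (\<forall>k\<in>{1..n}. \<forall>i<2. \<forall>j<2. lin_map n cc f k i j = 0) \<longrightarrow> (\<forall>l\<le>n. f l = 0)"
    proof (intro allI impI)
      fix f l assume z: "\<forall>k\<in>{1..n}. \<forall>i<2. \<forall>j<2. lin_map n cc f k i j = 0" and l: "l \<le> n"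
      show "f l = 0"
      proof (cases "l = 0")
        case True
        have a: "lin_map n cc f 1 0 0 = f 0" by (simp only: linm[OF k1]) simp
        have b: "lin_map n cc f 1 0 0 = 0" using z k1 by simp
        show ?thesis using a b True by simp
      next
        case False
        then have lk: "l \<in> {1..n}" using l by simp
        have a: "lin_map n cc f l 0 1 = f l" by (simp only: linm[OF lk]) simp
        have b: "lin_map n cc f l 0 1 = 0" using z lk by simp
        show ?thesis using a b by simp
      qed
    qed
  next
    show "\<forall>p B. dual_pos n p B \<longleftrightarrow> dsum_pos n p (lin_map_ampl n cc B)"
      unfolding dsum_iff using fwd bwd[OF n1] by blast
  qed
qed

end
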